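(* Let $d\ge2$ and let $\mathbb{Q}$ be a stationary Gibbs measure on $\Omega=\{0,1\}^{\mathbb{Z}^d}$. Then, if $\alpha<1/2$ and $\varepsilon>0$ is small enough, there exists $\nu>0$ such that for all $n\ge1$, $$\mathbb{Q}(\mathcal{G}_n(\varepsilon,\alpha))>1-e^{-\nu n^d},$$ where $\mathcal{G}_n(\varepsilon,\alpha)$ is identified with the set of configurations $\omega$ such that $\omega_{C_n}$ is $(\varepsilon,\alpha)$-good.
   Context: For finite $V\subseteq\mathbb{Z}^d$, $\Delta(V,\eta,\sigma)=\sum_{x\in V}|\eta_x-\sigma_x|$. $C_n=[0,n]^d\cap\mathbb{Z}^d$. An $n$-pattern is a map $A_n:C_n\to\{0,1\}$, and $[A_n]^\varepsilon=\{\omega\in\Omega:\Delta(C_n,\omega,A_n)\le\varepsilon|C_n|\}$. For $x\in\mathbb{Z}^d$, $\theta_x[A_n]^\varepsilon$ is the set of $\omega$ whose restriction to $C_n+x$, translated back to $C_n$, is within Hamming distance $\varepsilon|C_n|$ of $A_n$. For $0<\alpha<1$, $0\le\varepsilon<1$, $A_n$ is $(\varepsilon,\alpha)$-good if $[A_n]^\varepsilon\cap\theta_x[A_n]^\varepsilon=\emptyset$ for all $x\in\mathbb{Z}^d$ with $0<|x|\le\alpha n$ (sup-norm); $\mathcal{G}_n(\varepsilon,\alpha)$ is the set of such patterns. *)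

theory Defs
  imports "HOL-Probability.Probability"
begin

type_synonym 'd site = "int ^ 'd"
type_synonym 'd config = "'d site \<Rightarrow> bool"

text \<open>The measurable space Omega = {0,1}^(Z^d) with the product sigma-algebra
  (a configuration is a function from sites to bool; True = 1, False = 0).\<close>
definition Omega_space :: "('d::finite) config measure" where
  "Omega_space = PiM UNIV (\<lambda>_. count_space UNIV)"

definition supnorm :: "('d::finite) site \<Rightarrow> int" where
  "supnorm x = Max (range (\<lambda>i. \<bar>x $ i\<bar>))"

definition cube :: "nat \<Rightarrow> ('d::finite) site set" where
  "cube n = {x. \<forall>i. 0 \<le> x $ i \<and> x $ i \<le> int n}"

definition Delta :: "('d::finite) site set \<Rightarrow> 'd config \<Rightarrow> 'd config \<Rightarrow> real" where
  "Delta V \<eta> \<sigma> = (\<Sum>x\<in>V. \<bar>of_bool (\<eta> x) - of_bool (\<sigma> x)\<bar>)"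

text \<open>[A_n]^eps (the pattern A is a configuration of which only the values on C_n matter).\<close>
definition cyl :: "nat \<Rightarrow> real \<Rightarrow> ('d::finite) config \<Rightarrow> 'd config set" where
  "cyl n \<epsilon> A = {\<omega>. Delta (cube n) \<omega> A \<le> \<epsilon> * real (card (cube n :: 'd site set))}"

definition shifted_cyl :: "nat \<Rightarrow> real \<Rightarrow> ('d::finite) config \<Rightarrow> 'd site \<Rightarrow> 'd config set" where
  "shifted_cyl n \<epsilon> A x = {\<omega>. Delta (cube n) (\<lambda>y. \<omega> (y + x)) A \<le> \<epsilon> * real (card (cube n :: 'd site set))}"

definition good_pattern :: "nat \<Rightarrow> real \<Rightarrow> real \<Rightarrow> ('d::finite) config \<Rightarrow> bool" where
  "good_pattern n \<epsilon> \<alpha> A \<longleftrightarrow>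
     (\<forall>x::'d site. x \<noteq> 0 \<and> real_of_int (supnorm x) \<le> \<alpha> * real n \<longrightarrow>
        cyl n \<epsilon> A \<inter> shifted_cyl n \<epsilon> A x = {})"

definition good_set :: "nat \<Rightarrow> real \<Rightarrow> real \<Rightarrow> ('d::finite) config set" where
  "good_set n \<epsilon> \<alpha> = {\<omega>. good_pattern n \<epsilon> \<alpha> (\<lambda>y. if y \<in> cube n then \<omega> y else False)}"

definition ti_abs_summable_potential :: "(('d::finite) site set \<Rightarrow> 'd config \<Rightarrow> real) \<Rightarrow> bool" where
  "ti_abs_summable_potential \<Phi> \<longleftrightarrow>
     (\<forall>A \<omega> \<omega>'. finite A \<longrightarrow> (\<forall>x\<in>A. \<omega> x = \<omega>' x) \<longrightarrow> \<Phi> A \<omega> = \<Phi> A \<omega>') \<and>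
     (\<forall>A x \<omega>. finite A \<longrightarrow> \<Phi> ((\<lambda>y. y + x) ` A) \<omega> = \<Phi> A (\<lambda>y. \<omega> (y + x))) \<and>
     ((\<lambda>A. SUP \<omega>. \<bar>\<Phi> A \<omega>\<bar>) summable_on {A. finite A \<and> (0::'d site) \<in> A})"

definition hamiltonian :: "(('d::finite) site set \<Rightarrow> 'd config \<Rightarrow> real) \<Rightarrow> 'd site set \<Rightarrow> 'd config \<Rightarrow> real" where
  "hamiltonian \<Phi> \<Lambda> \<omega> = infsum (\<lambda>A. \<Phi> A \<omega>) {A. finite A \<and> A \<inter> \<Lambda> \<noteq> {}}"

definition splice :: "('d::finite) site set \<Rightarrow> 'd site set \<Rightarrow> 'd config \<Rightarrow> 'd config" where
  "splice \<Lambda> S \<omega> = (\<lambda>x. if x \<in> \<Lambda> then x \<in> S else \<omega> x)"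

definition gibbs_kernel :: "(('d::finite) site set \<Rightarrow> 'd config \<Rightarrow> real) \<Rightarrow> 'd site set \<Rightarrow> 'd site set \<Rightarrow> 'd config \<Rightarrow> real" where
  "gibbs_kernel \<Phi> \<Lambda> S \<omega> =
     exp (- hamiltonian \<Phi> \<Lambda> (splice \<Lambda> S \<omega>)) /
     (\<Sum>T\<in>Pow \<Lambda>. exp (- hamiltonian \<Phi> \<Lambda> (splice \<Lambda> T \<omega>)))"

definition is_gibbs_for :: "(('d::finite) site set \<Rightarrow> 'd config \<Rightarrow> real) \<Rightarrow> 'd config measure \<Rightarrow> bool" where
  "is_gibbs_for \<Phi> Q \<longleftrightarrow>
     prob_space Q \<and> sets Q = sets Omega_space \<and>
     (\<forall>\<Lambda> S B. finite \<Lambda> \<longrightarrow> S \<subseteq> \<Lambda> \<longrightarrow> B \<in> sets Q \<longrightarrow>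
        (\<forall>\<omega> \<omega>'. (\<forall>x. x \<notin> \<Lambda> \<longrightarrow> \<omega> x = \<omega>' x) \<longrightarrow> (\<omega> \<in> B \<longleftrightarrow> \<omega>' \<in> B)) \<longrightarrow>
        measure Q ({\<omega> \<in> space Q. \<forall>x\<in>\<Lambda>. \<omega> x = (x \<in> S)} \<inter> B) =
          (\<integral>\<omega>. indicator B \<omega> * gibbs_kernel \<Phi> \<Lambda> S \<omega> \<partial>Q))"

definition stationary :: "('d::finite) config measure \<Rightarrow> bool" where
  "stationary Q \<longleftrightarrow> (\<forall>x::'d site. distr Q Q (\<lambda>\<omega> y. \<omega> (y + x)) = Q)"

definition stationary_gibbs :: "('d::finite) config measure \<Rightarrow> bool" where
  "stationary_gibbs Q \<longleftrightarrow> stationary Q \<and>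
     (\<exists>\<Phi>. ti_abs_summable_potential \<Phi> \<and> is_gibbs_for \<Phi> Q)"

end

theory Submission
  imports Defs
begin

lemma space_Omega: "space Omega_space = (UNIV :: ('d::finite) config set)"
  by (simp add: Omega_space_def space_PiM)

lemma site_meas: "{\<omega>::('d::finite) config. \<omega> y = b} \<in> sets Omega_space"
proof -
  have "(\<lambda>\<omega>::'d config. \<omega> y) \<in> measurable Omega_space (count_space UNIV)"
    unfolding Omega_space_def by (rule measurable_component_singleton) simp
  from measurable_sets[OF this, of "{b}"] show ?thesis by (simp add: space_Omega vimage_def)
qed

lemma fin_dep_meas:
  fixes B :: "('d::finite) config set"
  assumes F: "finite F"
    and dep: "\<And>\<omega> \<omega>'. (\<forall>x\<in>F. \<omega> x = \<omega>' x) \<Longrightarrow> \<omega> \<in> B \<longleftrightarrow> \<omega>' \<in> B"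
  shows "B \<in> sets Omega_space"
proof -
  define R where "R = (\<lambda>\<omega>. restrict \<omega> F) ` B"
  have fR: "finite R"
  proof (rule finite_subset)
    show "R \<subseteq> PiE F (\<lambda>_. UNIV)" unfolding R_def by auto
    show "finite (PiE F (\<lambda>_. UNIV :: bool set))" using F by (simp add: finite_PiE)
  qed
  have eq: "B = (\<Union>p\<in>R. {\<omega>. \<forall>x\<in>F. \<omega> x = p x})"
  proof safe
    fix \<omega> assume "\<omega> \<in> B" thus "\<omega> \<in> (\<Union>p\<in>R. {\<omega>. \<forall>x\<in>F. \<omega> x = p x})"
      unfolding R_def by auto
  next
    fix \<omega> p assume "p \<in> R" "\<forall>x\<in>F. \<omega> x = p x"
    then obtain \<omega>0 where "\<omega>0 \<in> B" "p = restrict \<omega>0 F" unfolding R_def by auto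
    with dep[of \<omega> \<omega>0] \<open>\<forall>x\<in>F. \<omega> x = p x\<close> show "\<omega> \<in> B" by auto
  qed
  have "\<And>p. {\<omega>::'d config. \<forall>x\<in>F. \<omega> x = p x} \<in> sets Omega_space"
  proof -
    fix p :: "'d site \<Rightarrow> bool"
    have "{\<omega>::'d config. \<forall>x\<in>F. \<omega> x = p x} \<in> sets Omega_space"
      using F
    proof (induction F rule: finite_induct)
      case empty
      have "{\<omega>::'d config. \<forall>x\<in>{}. \<omega> x = p x} = space Omega_space" by (simp add: space_Omega)
      then show ?case by (simp only: sets.top)
    next
      case (insert y F)
      have "{\<omega>::'d config. \<forall>x\<in>insert y F. \<omega> x = p x} = {\<omega>. \<omega> y = p y} \<inter> {\<omega>. \<forall>x\<in>F. \<omega> x = p x}" by auto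
      then show ?case by (simp only: sets.Int[OF site_meas insert.IH])
    qed
    then show "{\<omega>::'d config. \<forall>x\<in>F. \<omega> x = p x} \<in> sets Omega_space" .
  qed
  then show ?thesis using fR by (subst eq) (rule sets.finite_UN)
qed

lemma pot_local:
  assumes ti: "ti_abs_summable_potential \<Phi>" and A: "finite A" and eq: "\<forall>x\<in>A. \<omega> x = \<omega>' x"
  shows "\<Phi> A \<omega> = \<Phi> A \<omega>'"
  using ti A eq unfolding ti_abs_summable_potential_def by blast

lemma pot_bdd:
  fixes \<Phi> :: "('d::finite) site set \<Rightarrow> 'd config \<Rightarrow> real"
  assumes ti: "ti_abs_summable_potential \<Phi>" and A: "finite A"
  shows "bdd_above (range (\<lambda>\<omega>. \<bar>\<Phi> A \<omega>\<bar>))"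
proof -
  have "range (\<lambda>\<omega>. \<bar>\<Phi> A \<omega>\<bar>) \<subseteq> (\<lambda>S. \<bar>\<Phi> A (\<lambda>x. x \<in> S)\<bar>) ` Pow A"
  proof
    fix r assume "r \<in> range (\<lambda>\<omega>. \<bar>\<Phi> A \<omega>\<bar>)"
    then obtain \<omega> where r: "r = \<bar>\<Phi> A \<omega>\<bar>" by auto
    have "\<Phi> A \<omega> = \<Phi> A (\<lambda>x. x \<in> {x\<in>A. \<omega> x})" by (rule pot_local[OF ti A]) auto
    then have "r = (\<lambda>S. \<bar>\<Phi> A (\<lambda>x. x \<in> S)\<bar>) {x\<in>A. \<omega> x}" using r by simp
    moreover have "{x\<in>A. \<omega> x} \<in> Pow A" by auto
    ultimately show "r \<in> (\<lambda>S. \<bar>\<Phi> A (\<lambda>x. x \<in> S)\<bar>) ` Pow A" by blast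
  qed
  moreover have "finite ((\<lambda>S. \<bar>\<Phi> A (\<lambda>x. x \<in> S)\<bar>) ` Pow A)" using A by simp
  ultimately show ?thesis by (meson bdd_above_mono bdd_finite(1))
qed

lemma pot_le_sup:
  fixes \<Phi> :: "('d::finite) site set \<Rightarrow> 'd config \<Rightarrow> real"
  assumes ti: "ti_abs_summable_potential \<Phi>" and A: "finite A"
  shows "\<bar>\<Phi> A \<omega>\<bar> \<le> (SUP \<omega>. \<bar>\<Phi> A \<omega>\<bar>)"
  using pot_bdd[OF ti A] by (intro cSUP_upper) auto

lemma sup_shift:
  fixes \<Phi> :: "('d::finite) site set \<Rightarrow> 'd config \<Rightarrow> real"
  assumes ti: "ti_abs_summable_potential \<Phi>" and A: "finite A"
  shows "(SUP \<omega>. \<bar>\<Phi> ((\<lambda>y. y + x) ` A) \<omega>\<bar>) = (SUP \<omega>. \<bar>\<Phi> A \<omega>\<bar>)"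
proof -
  have "\<And>\<omega>. \<Phi> ((\<lambda>y. y + x) ` A) \<omega> = \<Phi> A (\<lambda>y. \<omega> (y + x))"
    using ti A unfolding ti_abs_summable_potential_def by blast
  then have "(SUP \<omega>. \<bar>\<Phi> ((\<lambda>y. y + x) ` A) \<omega>\<bar>) = (SUP \<omega>. \<bar>\<Phi> A (\<lambda>y. \<omega> (y + x))\<bar>)" by simp
  also have "\<dots> = Sup ((\<lambda>\<sigma>. \<bar>\<Phi> A \<sigma>\<bar>) ` range (\<lambda>\<omega> y. \<omega> (y + x)))"
    by (simp add: image_image)
  also have "range (\<lambda>(\<omega>::'d config) y. \<omega> (y + x)) = UNIV"
  proof (rule surjI)
    fix \<sigma> :: "'d config" show "(\<lambda>y. (\<lambda>z. \<sigma> (z - x)) (y + x)) = \<sigma>" by simp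
  qed
  finally show ?thesis by simp
qed

definition Kpot :: "(('d::finite) site set \<Rightarrow> 'd config \<Rightarrow> real) \<Rightarrow> real" where
  "Kpot \<Phi> = infsum (\<lambda>A. SUP \<omega>. \<bar>\<Phi> A \<omega>\<bar>) {A. finite A \<and> (0::'d site) \<in> A}"

lemma ham_bound:
  fixes \<Phi> :: "('d::finite) site set \<Rightarrow> 'd config \<Rightarrow> real"
  assumes ti: "ti_abs_summable_potential \<Phi>"
  shows "\<bar>hamiltonian \<Phi> {y} \<omega>\<bar> \<le> Kpot \<Phi>"
proof -
  define g where "g = (\<lambda>A::'d site set. SUP \<omega>. \<bar>\<Phi> A \<omega>\<bar>)"
  define S0 where "S0 = {A. finite A \<and> (0::'d site) \<in> A}"
  define h where "h = (\<lambda>A::'d site set. (\<lambda>z. z + y) ` A)"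
  have g0: "g summable_on S0" using ti unfolding ti_abs_summable_potential_def g_def S0_def by blast
  have Sy1: "{A. finite A \<and> A \<inter> {y} \<noteq> {}} \<subseteq> h ` S0"
  proof
    fix A :: "'d site set" assume "A \<in> {A. finite A \<and> A \<inter> {y} \<noteq> {}}"
    then have A: "finite A" "y \<in> A" by auto
    have "A = h ((\<lambda>z. z - y) ` A)" unfolding h_def by (auto simp: image_image)
    moreover have "(\<lambda>z. z - y) ` A \<in> S0" using A unfolding S0_def by force
    ultimately show "A \<in> h ` S0" by blast
  qed
  have Sy2: "h ` S0 \<subseteq> {A. finite A \<and> A \<inter> {y} \<noteq> {}}"
    unfolding h_def S0_def by force
  have Sy: "{A. finite A \<and> A \<inter> {y} \<noteq> {}} = h ` S0" using Sy1 Sy2 by (rule antisym)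
  have inj: "inj_on h S0"
  proof (rule inj_onI)
    fix A B assume "h A = h B"
    then have "(\<lambda>z. z - y) ` h A = (\<lambda>z. z - y) ` h B" by simp
    then show "A = B" unfolding h_def by (simp add: image_image)
  qed
  have gh: "(g \<circ> h) A = g A" if "A \<in> S0" for A
  proof -
    have "finite A" using that unfolding S0_def by simp
    then show ?thesis unfolding g_def h_def comp_def by (rule sup_shift[OF ti])
  qed
  have "(g \<circ> h) summable_on S0" by (subst summable_on_cong[OF gh]) (auto intro: g0)
  then have gsum: "g summable_on h ` S0" by (subst summable_on_reindex[OF inj])
  have "infsum g (h ` S0) = infsum (g \<circ> h) S0" by (rule infsum_reindex[OF inj])
  also have "\<dots> = infsum g S0" by (rule infsum_cong[OF gh])
  finally have ginf: "infsum g (h ` S0) = Kpot \<Phi>" unfolding Kpot_def g_def S0_def .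
  have gnn: "\<And>A. A \<in> h ` S0 \<Longrightarrow> 0 \<le> g A"
  proof -
    fix A assume "A \<in> h ` S0"
    then have "finite A" unfolding h_def S0_def by auto
    then show "0 \<le> g A" unfolding g_def using pot_le_sup[OF ti, of A] by (meson abs_ge_zero order_trans)
  qed
  have fle: "\<And>A. A \<in> h ` S0 \<Longrightarrow> norm (\<Phi> A \<omega>) \<le> g A"
  proof -
    fix A assume "A \<in> h ` S0"
    then have "finite A" unfolding h_def S0_def by auto
    then show "norm (\<Phi> A \<omega>) \<le> g A" unfolding g_def using pot_le_sup[OF ti, of A] by simp
  qed
  have abs: "(\<lambda>A. norm (\<Phi> A \<omega>)) summable_on h ` S0"
    by (rule summable_on_comparison_test[OF gsum]) (use fle in auto)
  have "\<bar>hamiltonian \<Phi> {y} \<omega>\<bar> = norm (infsum (\<lambda>A. \<Phi> A \<omega>) (h ` S0))"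
    unfolding hamiltonian_def Sy by simp
  also have "\<dots> \<le> infsum (\<lambda>A. norm (\<Phi> A \<omega>)) (h ` S0)" by (rule norm_infsum_bound[OF abs])
  also have "\<dots> \<le> infsum g (h ` S0)" by (rule infsum_mono[OF abs gsum fle])
  finally show ?thesis using ginf by simp
qed

definition dlt :: "(('d::finite) site set \<Rightarrow> 'd config \<Rightarrow> real) \<Rightarrow> real" where
  "dlt \<Phi> = exp (- 2 * Kpot \<Phi>) / 2"

lemma Kpot_nonneg:
  fixes \<Phi> :: "('d::finite) site set \<Rightarrow> 'd config \<Rightarrow> real"
  assumes ti: "ti_abs_summable_potential \<Phi>" shows "0 \<le> Kpot \<Phi>"
  using ham_bound[OF ti, of 0 undefined] by linarith

lemma dlt_pos: "0 < dlt \<Phi>" unfolding dlt_def by simp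

lemma dlt_le: assumes ti: "ti_abs_summable_potential \<Phi>" shows "dlt \<Phi> \<le> 1/2"
  using Kpot_nonneg[OF ti] unfolding dlt_def by simp

lemma kernel_upper:
  fixes \<Phi> :: "('d::finite) site set \<Rightarrow> 'd config \<Rightarrow> real"
  assumes ti: "ti_abs_summable_potential \<Phi>" and S: "S = {} \<or> S = {y}"
  shows "gibbs_kernel \<Phi> {y} S \<omega> \<le> 1 - dlt \<Phi>" "0 \<le> gibbs_kernel \<Phi> {y} S \<omega>"
proof -
  define H where "H = (\<lambda>T. hamiltonian \<Phi> {y} (splice {y} T \<omega>))"
  define K where "K = Kpot \<Phi>"
  define S' where "S' = (if S = {} then {y} else {})"
  have HB: "\<bar>H T\<bar> \<le> K" for T unfolding H_def K_def by (rule ham_bound[OF ti])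
  have pow: "Pow {y} = {{}, {y}}" by auto
  have sum: "(\<Sum>T\<in>Pow {y}. exp (- H T)) = exp (- H S) + exp (- H S')"
    using S unfolding pow S'_def by auto
  have ker: "gibbs_kernel \<Phi> {y} S \<omega> = exp (- H S) / (exp (- H S) + exp (- H S'))"
  proof -
    have "gibbs_kernel \<Phi> {y} S \<omega> = exp (- H S) / (\<Sum>T\<in>Pow {y}. exp (- H T))"
      by (simp add: gibbs_kernel_def H_def)
    then show ?thesis by (simp only: sum)
  qed
  have a: "exp (- H S) \<le> exp K" "exp (- H S') \<ge> exp (- K)" "exp (- H S') \<le> exp K"
    using HB[of S] HB[of S'] by auto
  have pos: "0 < exp (- H S)" "0 < exp (- H S')" by auto
  have fr: "exp (- K) / (2 * exp K) \<le> exp (- H S') / (exp (- H S) + exp (- H S'))"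
    using a pos by (intro frac_le) linarith+
  have "exp (- K) / (2 * exp K) = dlt \<Phi>"
    unfolding dlt_def K_def by (simp add: exp_minus field_simps power2_eq_square exp_add[symmetric])
  with fr have fr2: "dlt \<Phi> \<le> exp (- H S') / (exp (- H S) + exp (- H S'))" by simp
  have "exp (- H S) / (exp (- H S) + exp (- H S')) = 1 - exp (- H S') / (exp (- H S) + exp (- H S'))"
  proof -
    have ne: "exp (- H S) + exp (- H S') \<noteq> 0" using pos by linarith
    show ?thesis using ne by (simp add: divide_simps)
  qed
  then show "gibbs_kernel \<Phi> {y} S \<omega> \<le> 1 - dlt \<Phi>" using ker fr2 by simp
  show "0 \<le> gibbs_kernel \<Phi> {y} S \<omega>" using ker pos by simp
qed

lemma site_upper:
  fixes Q :: "('d::finite) config measure"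
  assumes G: "is_gibbs_for \<Phi> Q" and ti: "ti_abs_summable_potential \<Phi>"
    and B: "B \<in> sets Q"
    and ind: "\<And>\<omega> \<omega>'. (\<forall>x. x \<noteq> y \<longrightarrow> \<omega> x = \<omega>' x) \<Longrightarrow> (\<omega> \<in> B \<longleftrightarrow> \<omega>' \<in> B)"
  shows "measure Q ({\<omega>. \<omega> y = b} \<inter> B) \<le> (1 - dlt \<Phi>) * measure Q B"
proof -
  define S where "S = (if b then {y} else {})"
  have PQ: "prob_space Q" using G unfolding is_gibbs_for_def by simp
  then interpret prob_space Q .
  have "finite {y}" "S \<subseteq> {y}" unfolding S_def by auto
  moreover have "\<forall>\<omega> \<omega>'. (\<forall>x. x \<notin> {y} \<longrightarrow> \<omega> x = \<omega>' x) \<longrightarrow> (\<omega> \<in> B \<longleftrightarrow> \<omega>' \<in> B)"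
    using ind by auto
  ultimately have dlr: "measure Q ({\<omega> \<in> space Q. \<forall>x\<in>{y}. \<omega> x = (x \<in> S)} \<inter> B) =
          (\<integral>\<omega>. indicator B \<omega> * gibbs_kernel \<Phi> {y} S \<omega> \<partial>Q)"
    using G B unfolding is_gibbs_for_def by blast
  have "B \<subseteq> space Q" using B by (rule sets.sets_into_space)
  then have seteq: "{\<omega> \<in> space Q. \<forall>x\<in>{y}. \<omega> x = (x \<in> S)} \<inter> B = {\<omega>. \<omega> y = b} \<inter> B"
    unfolding S_def by auto
  have Sc: "S = {} \<or> S = {y}" unfolding S_def by auto
  have int2: "integrable Q (\<lambda>\<omega>. indicator B \<omega> * (1 - dlt \<Phi>))"
    using B by (intro integrable_mult_left integrable_real_indicator) (auto simp: less_top[symmetric] emeasure_finite)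
  have "(\<integral>\<omega>. indicator B \<omega> * gibbs_kernel \<Phi> {y} S \<omega> \<partial>Q) \<le> (\<integral>\<omega>. indicator B \<omega> * (1 - dlt \<Phi>) \<partial>Q)"
  proof (cases "integrable Q (\<lambda>\<omega>. indicator B \<omega> * gibbs_kernel \<Phi> {y} S \<omega>)")
    case True
    show ?thesis
    proof (rule integral_mono[OF True int2])
      fix \<omega> show "indicator B \<omega> * gibbs_kernel \<Phi> {y} S \<omega> \<le> indicator B \<omega> * (1 - dlt \<Phi>)"
        by (rule mult_left_mono[OF kernel_upper(1)[OF ti Sc]]) simp
    qed
  next
    case False
    have "0 \<le> (\<integral>\<omega>. indicator B \<omega> * (1 - dlt \<Phi>) \<partial>Q)"
      using dlt_le[OF ti] by (intro integral_nonneg_AE) (auto simp: indicator_def)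
    then show ?thesis using False by (simp add: not_integrable_integral_eq)
  qed
  also have "\<dots> = (1 - dlt \<Phi>) * measure Q B" using B by simp
  finally show ?thesis using dlr seteq by simp
qed

lemma site_lower:
  fixes Q :: "('d::finite) config measure"
  assumes G: "is_gibbs_for \<Phi> Q" and ti: "ti_abs_summable_potential \<Phi>"
    and B: "B \<in> sets Q"
    and ind: "\<And>\<omega> \<omega>'. (\<forall>x. x \<noteq> y \<longrightarrow> \<omega> x = \<omega>' x) \<Longrightarrow> (\<omega> \<in> B \<longleftrightarrow> \<omega>' \<in> B)"
  shows "measure Q ({\<omega>. \<omega> y = b} \<inter> B) \<ge> dlt \<Phi> * measure Q B"
proof -
  have PQ: "prob_space Q" using G unfolding is_gibbs_for_def by simp
  then interpret prob_space Q .
  have sQ: "sets Q = sets Omega_space" using G unfolding is_gibbs_for_def by simp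
  have m1: "{\<omega>. \<omega> y = b} \<inter> B \<in> sets Q" "{\<omega>. \<omega> y = (\<not> b)} \<inter> B \<in> sets Q"
    using B site_meas sQ by auto
  have eqB: "({\<omega>. \<omega> y = b} \<inter> B) \<union> ({\<omega>. \<omega> y = (\<not> b)} \<inter> B) = B" by auto
  have disj: "({\<omega>. \<omega> y = b} \<inter> B) \<inter> ({\<omega>. \<omega> y = (\<not> b)} \<inter> B) = {}" by auto
  have "measure Q (({\<omega>. \<omega> y = b} \<inter> B) \<union> ({\<omega>. \<omega> y = (\<not> b)} \<inter> B)) = measure Q ({\<omega>. \<omega> y = b} \<inter> B) + measure Q ({\<omega>. \<omega> y = (\<not> b)} \<inter> B)"
    by (rule finite_measure_Union[OF m1 disj])
  then have "measure Q B = measure Q ({\<omega>. \<omega> y = b} \<inter> B) + measure Q ({\<omega>. \<omega> y = (\<not> b)} \<inter> B)"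
    by (simp only: eqB)
  moreover have "measure Q ({\<omega>. \<omega> y = (\<not> b)} \<inter> B) \<le> (1 - dlt \<Phi>) * measure Q B"
    by (rule site_upper[OF G ti B ind])
  ultimately show ?thesis by (simp add: algebra_simps)
qed

lemma pick_end:
  fixes F :: "('d::finite) site set"
  assumes F: "finite F" "F \<noteq> {}" and x: "x \<noteq> 0"
  shows "\<exists>y\<in>F. y - x \<notin> F"
proof -
  obtain i where i: "x $ i \<noteq> 0" using x by (metis vec_eq_iff zero_index)
  define f where "f = (\<lambda>z::'d site. sgn (x $ i) * z $ i)"
  define m where "m = Min (f ` F)"
  have "m \<in> f ` F" unfolding m_def using F by (intro Min_in) auto
  then obtain y where y: "y \<in> F" "f y = m" by auto
  have le: "\<And>z. z \<in> F \<Longrightarrow> m \<le> f z" unfolding m_def using F by (intro Min_le) auto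
  have "f (y - x) = f y - \<bar>x $ i\<bar>" unfolding f_def by (simp add: algebra_simps abs_sgn)
  then have "f (y - x) < m" using y i by simp
  then have "y - x \<notin> F" using le by force
  then show ?thesis using y by blast
qed

context
  fixes Q :: "('d::finite) config measure" and \<Phi>
  assumes G: "is_gibbs_for \<Phi> Q" and ti: "ti_abs_summable_potential \<Phi>"
begin

lemma PQ: "prob_space Q" using G unfolding is_gibbs_for_def by simp
lemma sQ: "sets Q = sets Omega_space" using G unfolding is_gibbs_for_def by simp
lemma spQ: "space Q = UNIV" using sets_eq_imp_space_eq[OF sQ] by (simp add: space_Omega)

lemma dep_meas:
  assumes "finite F" "\<And>\<omega> \<omega>'. (\<forall>x\<in>F. \<omega> x = \<omega>' x) \<Longrightarrow> \<omega> \<in> B \<longleftrightarrow> \<omega>' \<in> B"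
  shows "B \<in> sets Q"
  using fin_dep_meas[OF assms] sQ by simp

lemma cyl_lower:
  assumes F: "finite F"
  shows "measure Q {\<omega>. \<forall>y\<in>F. \<omega> y = A y} \<ge> dlt \<Phi> ^ card F"
  using F
proof (induction F rule: finite_induct)
  case empty
  have "{\<omega>::'d config. \<forall>y\<in>{}. \<omega> y = A y} = space Q" using spQ by simp
  then show ?case using prob_space.prob_space[OF PQ] by simp
next
  case (insert y F)
  define B where "B = {\<omega>::'d config. \<forall>z\<in>F. \<omega> z = A z}"
  have B: "B \<in> sets Q" unfolding B_def by (rule dep_meas[OF insert(1)]) auto
  have ind: "(\<omega> \<in> B \<longleftrightarrow> \<omega>' \<in> B)" if ag: "\<forall>x. x \<noteq> y \<longrightarrow> \<omega> x = \<omega>' x" for \<omega> \<omega>'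
  proof -
    have "\<forall>z\<in>F. \<omega> z = \<omega>' z" using ag insert(2) by metis
    then show ?thesis by (simp add: B_def)
  qed
  have eq: "{\<omega>::'d config. \<forall>z\<in>insert y F. \<omega> z = A z} = {\<omega>. \<omega> y = A y} \<inter> B"
    unfolding B_def by auto
  have "dlt \<Phi> ^ card (insert y F) = dlt \<Phi> * dlt \<Phi> ^ card F" using insert by simp
  also have "\<dots> \<le> dlt \<Phi> * measure Q B"
    using insert(3) dlt_pos[of \<Phi>] unfolding B_def by (intro mult_left_mono) auto
  also have "\<dots> \<le> measure Q ({\<omega>. \<omega> y = A y} \<inter> B)" by (rule site_lower[OF G ti B ind])
  finally show ?case by (simp only: eq)
qed

lemma chain_upper:
  assumes F: "finite F" and x: "x \<noteq> 0"
  shows "measure Q {\<omega>. \<forall>y\<in>F. \<omega> y = \<omega> (y + x)} \<le> (1 - dlt \<Phi>) ^ card F"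
  using F
proof (induction "card F" arbitrary: F)
  case 0
  then have "F = {}" by simp
  then show ?case using prob_space.prob_le_1[OF PQ] by simp
next
  case (Suc k)
  then have Fne: "F \<noteq> {}" by auto
  obtain y where y: "y \<in> F" "y - x \<notin> F" using pick_end[OF Suc(3) Fne x] by blast
  define B where "B = {\<omega>::'d config. \<forall>z\<in>F - {y}. \<omega> z = \<omega> (z + x)}"
  define Bb where "Bb = (\<lambda>b. {\<omega>::'d config. \<omega> (y + x) = b} \<inter> B)"
  define W where "W = F \<union> (\<lambda>z. z + x) ` F"
  have W: "finite W" unfolding W_def using Suc(3) by simp
  have yx: "y + x \<in> W" unfolding W_def using y by auto
  have Bb: "Bb b \<in> sets Q" for b
  proof (rule dep_meas[OF W])
    fix \<omega> \<omega>' :: "'d config" assume ag: "\<forall>z\<in>W. \<omega> z = \<omega>' z"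
    then have "\<omega> (y+x) = \<omega>' (y+x)" using yx by blast
    moreover have "\<forall>z\<in>F-{y}. \<omega> z = \<omega>' z \<and> \<omega> (z+x) = \<omega>' (z+x)" using ag unfolding W_def by blast
    ultimately show "\<omega> \<in> Bb b \<longleftrightarrow> \<omega>' \<in> Bb b" unfolding Bb_def B_def by auto
  qed
  have B: "B \<in> sets Q"
    unfolding B_def by (rule dep_meas[OF W]) (auto simp: W_def)
  have ind: "(\<forall>x. x \<noteq> y \<longrightarrow> \<omega> x = \<omega>' x) \<Longrightarrow> (\<omega> \<in> Bb b \<longleftrightarrow> \<omega>' \<in> Bb b)" for \<omega> \<omega>' b
  proof -
    assume ag: "\<forall>x. x \<noteq> y \<longrightarrow> \<omega> x = \<omega>' x"
    have "y + x \<noteq> y" using x by simp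
    then have h1: "\<omega> (y+x) = \<omega>' (y+x)" using ag by blast
    have "z \<noteq> y \<and> z + x \<noteq> y" if "z \<in> F - {y}" for z
    proof
      show "z \<noteq> y" using that by blast
      show "z + x \<noteq> y"
      proof
        assume "z + x = y" then have "z = y - x" by (simp add: algebra_simps)
        then show False using that y(2) by blast
      qed
    qed
    then have h2: "\<forall>z\<in>F-{y}. \<omega> z = \<omega>' z \<and> \<omega> (z+x) = \<omega>' (z+x)" using ag by blast
    show ?thesis unfolding Bb_def B_def using h1 h2 by auto
  qed
  have eq: "{\<omega>::'d config. \<forall>z\<in>F. \<omega> z = \<omega> (z + x)} =
            ({\<omega>. \<omega> y = True} \<inter> Bb True) \<union> ({\<omega>. \<omega> y = False} \<inter> Bb False)"
  proof -
    have eq0: "(\<forall>z\<in>F. \<omega> z = \<omega> (z+x)) \<longleftrightarrow> (\<omega> y = \<omega> (y+x) \<and> (\<forall>z\<in>F-{y}. \<omega> z = \<omega> (z+x)))" for \<omega> :: "'d config"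
      using y(1) by blast
    show ?thesis unfolding Bb_def B_def eq0 by blast
  qed
  have m1: "{\<omega>. \<omega> y = b} \<inter> Bb b \<in> sets Q" for b
  proof -
    have "{\<omega>::'d config. \<omega> y = b} \<in> sets Q" using site_meas[of y b] sQ by simp
    then show ?thesis using Bb[of b] by (rule sets.Int)
  qed
  have sumB: "measure Q (Bb True) + measure Q (Bb False) = measure Q B"
  proof -
    have u: "Bb True \<union> Bb False = B" unfolding Bb_def by auto
    have d: "Bb True \<inter> Bb False = {}" unfolding Bb_def by auto
    show ?thesis using finite_measure.finite_measure_Union[OF prob_space.finite_measure[OF PQ] Bb Bb d] u by simp
  qed
  have u1: "measure Q ({\<omega>. \<omega> y = True} \<inter> Bb True) \<le> (1 - dlt \<Phi>) * measure Q (Bb True)"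
    by (rule site_upper[OF G ti Bb ind])
  have u2: "measure Q ({\<omega>. \<omega> y = False} \<inter> Bb False) \<le> (1 - dlt \<Phi>) * measure Q (Bb False)"
    by (rule site_upper[OF G ti Bb ind])
  have kc: "k = card (F - {y})" using Suc(2) y(1) Suc(3) by simp
  have IH: "measure Q B \<le> (1 - dlt \<Phi>) ^ k"
    unfolding B_def using Suc(1)[OF kc] Suc(3) by (simp add: kc)
  have d0: "0 \<le> 1 - dlt \<Phi>" using dlt_le[OF ti] by simp
  have "measure Q {\<omega>::'d config. \<forall>z\<in>F. \<omega> z = \<omega> (z + x)} \<le>
        measure Q ({\<omega>. \<omega> y = True} \<inter> Bb True) + measure Q ({\<omega>. \<omega> y = False} \<inter> Bb False)"
    unfolding eq by (intro measure_Un_le m1)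
  also have "\<dots> \<le> (1 - dlt \<Phi>) * measure Q (Bb True) + (1 - dlt \<Phi>) * measure Q (Bb False)"
    using u1 u2 by linarith
  also have "\<dots> = (1 - dlt \<Phi>) * measure Q B" using sumB by (simp add: distrib_left[symmetric])
  also have "\<dots> \<le> (1 - dlt \<Phi>) * (1 - dlt \<Phi>) ^ k" using IH d0 by (rule mult_left_mono)
  also have "\<dots> = (1 - dlt \<Phi>) ^ card F" using Suc(2)[symmetric] by simp
  finally show ?case .
qed

end

lemma box_eq:
  "{x::int^'d::finite. \<forall>i. x $ i \<in> S i} = vec_lambda ` (PiE UNIV S)"
proof safe
  fix x :: "int^'d" assume x: "\<forall>i. x $ i \<in> S i"
  have "x = vec_lambda (\<lambda>i. x $ i)" by simp
  moreover have "(\<lambda>i. x $ i) \<in> PiE UNIV S" using x by auto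
  ultimately show "x \<in> vec_lambda ` (PiE UNIV S)" by blast
qed auto

lemma box_card:
  assumes "\<And>i. finite (S i)"
  shows "finite {x::int^'d::finite. \<forall>i. x $ i \<in> S i}"
    "card {x::int^'d::finite. \<forall>i. x $ i \<in> S i} = (\<Prod>i\<in>UNIV. card (S i))"
proof -
  have inj: "inj_on (vec_lambda :: ('d \<Rightarrow> int) \<Rightarrow> int^'d) (PiE UNIV S)"
    by (rule inj_onI) (metis vec_lambda_inverse UNIV_I)
  have fin: "finite (PiE UNIV S)" using assms by (simp add: finite_PiE)
  show "finite {x::int^'d::finite. \<forall>i. x $ i \<in> S i}" unfolding box_eq using fin by simp
  show "card {x::int^'d::finite. \<forall>i. x $ i \<in> S i} = (\<Prod>i\<in>UNIV. card (S i))"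
    unfolding box_eq card_image[OF inj] by (simp add: card_PiE)
qed

lemma cube_box: "cube n = {x::int^'d::finite. \<forall>i. x $ i \<in> {0..int n}}"
  unfolding cube_def by auto

lemma finite_cube: "finite (cube n :: ('d::finite) site set)"
  unfolding cube_box by (rule box_card) simp

lemma card_cube: "card (cube n :: ('d::finite) site set) = (n + 1) ^ CARD('d)"
proof -
  have e1: "nat (1 + int n) = Suc n" by (metis nat_int of_nat_Suc)
  have e2: "nat (int n + 1) = Suc n" using e1 by (simp add: add.commute)
  show ?thesis unfolding cube_box box_card(2)[OF finite_atLeastAtMost_int] by (simp add: e1 e2)
qed

lemma supnorm_ge: "\<bar>x $ i\<bar> \<le> supnorm (x::('d::finite) site)"
  unfolding supnorm_def by (rule Max_ge) auto

definition Pset :: "nat \<Rightarrow> ('d::finite) site \<Rightarrow> 'd site set" where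
  "Pset n x = {y \<in> cube n. y + x \<in> cube n}"

lemma Pset_box: "Pset n (x::('d::finite) site) = {y. \<forall>i. y $ i \<in> {max 0 (- x $ i) .. min (int n) (int n - x $ i)}}"
proof (rule set_eqI)
  fix y :: "'d site"
  have "y \<in> Pset n x \<longleftrightarrow> (\<forall>i. 0 \<le> y$i \<and> y$i \<le> int n \<and> 0 \<le> y$i + x$i \<and> y$i + x$i \<le> int n)"
    unfolding Pset_def cube_def by auto
  also have "\<dots> \<longleftrightarrow> (\<forall>i. y $ i \<in> {max 0 (- x $ i) .. min (int n) (int n - x $ i)})"
    by (intro all_cong1) (auto simp: max_def min_def)
  finally show "y \<in> Pset n x \<longleftrightarrow> y \<in> {y. \<forall>i. y $ i \<in> {max 0 (- x $ i) .. min (int n) (int n - x $ i)}}" by simp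
qed

lemma finite_Pset: "finite (Pset n x)"
  unfolding Pset_box by (rule box_card) simp

lemma card_Pset_lower:
  fixes x :: "('d::finite) site"
  assumes "\<And>i. 2 * \<bar>x $ i\<bar> \<le> int n"
  shows "real (card (Pset n x)) \<ge> real ((n + 1) ^ CARD('d)) / 2 ^ CARD('d)"
proof -
  have "real (card (Pset n x)) = (\<Prod>i\<in>UNIV. real (card {max 0 (- x $ i) .. min (int n) (int n - x $ i)}))"
    unfolding Pset_box box_card(2)[OF finite_atLeastAtMost_int] by simp
  also have "\<dots> \<ge> (\<Prod>i\<in>(UNIV::'d set). (real n + 1) / 2)"
  proof (rule prod_mono)
    fix i :: 'd
    have "card {max 0 (- x $ i) .. min (int n) (int n - x $ i)} = nat (int n + 1 - \<bar>x $ i\<bar>)"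
    proof -
      have "min (int n) (int n - x $ i) - max 0 (- x $ i) + 1 = int n + 1 - \<bar>x $ i\<bar>"
        using assms[of i] by (auto simp: abs_if min_def max_def)
      then show ?thesis by (simp only: card_atLeastAtMost_int)
    qed
    moreover have "0 \<le> int n + 1 - \<bar>x $ i\<bar>" using assms[of i] by linarith
    ultimately have "real (card {max 0 (- x $ i) .. min (int n) (int n - x $ i)}) = real_of_int (int n + 1 - \<bar>x $ i\<bar>)"
      by simp
    moreover have "real_of_int (int n + 1 - \<bar>x $ i\<bar>) \<ge> (real n + 1) / 2"
    proof -
      have "real_of_int (2 * \<bar>x $ i\<bar>) \<le> real_of_int (int n)" using assms[of i] by (simp only: of_int_le_iff)
      then have "2 * \<bar>real_of_int (x $ i)\<bar> \<le> real n" by simp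
      then show ?thesis by simp
    qed
    ultimately show "0 \<le> (real n + 1) / 2 \<and> (real n + 1) / 2 \<le> real (card {max 0 (- x $ i) .. min (int n) (int n - x $ i)})"
      by simp
  qed
  finally show ?thesis by (simp add: power_divide add.commute)
qed

lemma Delta_card:
  assumes "finite V"
  shows "Delta V \<eta> \<sigma> = real (card {y\<in>V. \<eta> y \<noteq> \<sigma> y})"
proof -
  have "Delta V \<eta> \<sigma> = (\<Sum>y\<in>V. of_bool (\<eta> y \<noteq> \<sigma> y))"
    unfolding Delta_def by (intro sum.cong) auto
  also have "\<dots> = real (card {y\<in>V. \<eta> y \<noteq> \<sigma> y})" using assms
    by (simp add: Int_def conj_commute)
  finally show ?thesis .
qed

definition badx :: "nat \<Rightarrow> ('d::finite) site \<Rightarrow> real \<Rightarrow> 'd config set" where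
  "badx n x M = {\<omega>. \<exists>E\<subseteq>Pset n x. real (card E) \<le> M \<and> (\<forall>y\<in>Pset n x - E. \<omega> y = \<omega> (y + x))}"

lemma bad_incl:
  fixes \<omega> :: "('d::finite) config"
  assumes "\<omega> \<notin> good_set n \<epsilon> \<alpha>"
  shows "\<exists>x. x \<noteq> 0 \<and> real_of_int (supnorm x) \<le> \<alpha> * real n \<and>
             \<omega> \<in> badx n x (2 * \<epsilon> * real (card (cube n :: 'd site set)))"
proof -
  define A where "A = (\<lambda>y. if y \<in> cube n then \<omega> y else False)"
  define L where "L = real (card (cube n :: 'd site set))"
  obtain x \<eta> where x: "x \<noteq> 0" "real_of_int (supnorm x) \<le> \<alpha> * real n"
    and \<eta>: "\<eta> \<in> cyl n \<epsilon> A" "\<eta> \<in> shifted_cyl n \<epsilon> A x"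
    using assms unfolding good_set_def good_pattern_def A_def by blast
  define E1 where "E1 = {y\<in>cube n. \<eta> y \<noteq> A y}"
  define E2 where "E2 = {y\<in>cube n. \<eta> (y + x) \<noteq> A y}"
  have c1: "real (card E1) \<le> \<epsilon> * L"
    using \<eta>(1) unfolding cyl_def E1_def L_def by (simp add: Delta_card[OF finite_cube])
  have c2: "real (card E2) \<le> \<epsilon> * L"
    using \<eta>(2) unfolding shifted_cyl_def E2_def L_def by (simp add: Delta_card[OF finite_cube])
  have fE1: "finite E1" "finite E2" unfolding E1_def E2_def using finite_cube[of n]
    by (auto intro: finite_subset[of _ "cube n"])
  define E where "E = Pset n x \<inter> (E2 \<union> (\<lambda>z. z - x) ` E1)"
  have "card E \<le> card (E2 \<union> (\<lambda>z. z - x) ` E1)"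
    unfolding E_def using fE1 by (intro card_mono) auto
  also have "\<dots> \<le> card E2 + card ((\<lambda>z. z - x) ` E1)" by (rule card_Un_le)
  also have "\<dots> \<le> card E2 + card E1" using card_image_le[OF fE1(1)] by simp
  finally have "real (card E) \<le> real (card E2) + real (card E1)" by linarith
  then have cE: "real (card E) \<le> 2 * \<epsilon> * L" using c1 c2 by linarith
  have "\<forall>y\<in>Pset n x - E. \<omega> y = \<omega> (y + x)"
  proof
    fix y assume y: "y \<in> Pset n x - E"
    then have yc: "y \<in> cube n" "y + x \<in> cube n" unfolding Pset_def by auto
    have "y \<notin> E2" using y unfolding E_def by auto
    then have 1: "\<eta> (y + x) = \<omega> y" using yc unfolding E2_def A_def by auto
    have "y + x \<notin> E1"
    proof
      assume "y + x \<in> E1"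
      then have "(\<lambda>z. z - x) (y + x) \<in> (\<lambda>z. z - x) ` E1" by blast
      then show False using y unfolding E_def by auto
    qed
    then have 2: "\<eta> (y + x) = \<omega> (y + x)" using yc unfolding E1_def A_def by auto
    show "\<omega> y = \<omega> (y + x)" using 1 2 by simp
  qed
  moreover have "E \<subseteq> Pset n x" unfolding E_def by auto
  ultimately have "\<omega> \<in> badx n x (2 * \<epsilon> * L)" unfolding badx_def using cE by blast
  then show ?thesis using x unfolding L_def by blast
qed

lemma subset_sum_bound:
  fixes P :: "'a set" and t d M :: real
  assumes P: "finite P" and t: "0 < t" "t \<le> 1" and d: "0 \<le> d"
  shows "(\<Sum>E\<in>{E\<in>Pow P. real (card E) \<le> M}. d ^ card (P - E)) \<le> t powr (- M) * (t + d) ^ card P"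
proof -
  have "(\<Sum>E\<in>{E\<in>Pow P. real (card E) \<le> M}. d ^ card (P - E))
        \<le> (\<Sum>E\<in>{E\<in>Pow P. real (card E) \<le> M}. t powr (- M) * (t ^ card E * d ^ card (P - E)))"
  proof (rule sum_mono)
    fix E assume E: "E \<in> {E\<in>Pow P. real (card E) \<le> M}"
    have "t powr (- M) * t ^ card E = t powr (real (card E) - M)"
      using t by (simp add: powr_realpow[symmetric] powr_add[symmetric])
    also have "\<dots> \<ge> t powr 0" using E t by (intro powr_mono') auto
    also have "t powr 0 = 1" using t by simp
    finally have "1 \<le> t powr (- M) * t ^ card E" .
    then show "d ^ card (P - E) \<le> t powr (- M) * (t ^ card E * d ^ card (P - E))"
      using d by (metis mult.assoc mult_le_cancel_right1 zero_le_power mult_right_mono mult_1)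
  qed
  also have "\<dots> \<le> (\<Sum>E\<in>Pow P. t powr (- M) * (t ^ card E * d ^ card (P - E)))"
    using P t d by (intro sum_mono2) auto
  also have "\<dots> = t powr (- M) * (\<Sum>E\<in>Pow P. (\<Prod>x\<in>E. t) * (\<Prod>x\<in>P - E. d))"
    by (simp add: sum_distrib_left)
  also have "(\<Sum>E\<in>Pow P. (\<Prod>x\<in>E. t) * (\<Prod>x\<in>P - E. d)) = (\<Prod>x\<in>P. t + d)"
    by (rule prod_add[OF P, symmetric])
  also have "\<dots> = (t + d) ^ card P" by simp
  finally show ?thesis .
qed

definition Acorner :: "nat \<Rightarrow> ('d::finite) config" where
  "Acorner n = (\<lambda>y. \<forall>i. y $ i = 0 \<or> y $ i = int n)"

lemma small_delta:
  assumes "finite V" "Delta V \<eta> \<sigma> \<le> e" "e < 1"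
  shows "\<forall>y\<in>V. \<eta> y = \<sigma> y"
proof -
  define S where "S = {y\<in>V. \<eta> y \<noteq> \<sigma> y}"
  have fS: "finite S" unfolding S_def using assms(1) by simp
  have "real (card S) < 1" using assms Delta_card[OF assms(1), of \<eta> \<sigma>] unfolding S_def by linarith
  then have "card S = 0" by simp
  then have "S = {}" using fS by simp
  then show ?thesis unfolding S_def by blast
qed

lemma corner_good:
  fixes \<omega> :: "('d::finite) config"
  assumes eL: "\<epsilon> * real (card (cube n :: 'd site set)) < 1" and al: "\<alpha> < 1/2" and n: "n \<ge> 1"
    and \<omega>: "\<forall>y\<in>cube n. \<omega> y = Acorner n y"
  shows "\<omega> \<in> good_set n \<epsilon> \<alpha>"
  unfolding good_set_def good_pattern_def mem_Collect_eq
proof (intro allI impI)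
  define A where "A = (\<lambda>y::'d site. if y \<in> cube n then \<omega> y else False)"
  fix x :: "'d site" assume x: "x \<noteq> 0 \<and> real_of_int (supnorm x) \<le> \<alpha> * real n"
  have xi: "\<bar>x $ i\<bar> < int n" for i
  proof -
    have "real_of_int \<bar>x $ i\<bar> \<le> real_of_int (supnorm x)" using supnorm_ge[of x i] by linarith
    also have "\<dots> \<le> \<alpha> * real n" using x by simp
    also have "\<dots> < real n" using al n by (simp add: mult_less_cancel_right2)
    finally show ?thesis by linarith
  qed
  show "cyl n \<epsilon> (\<lambda>y. if y \<in> cube n then \<omega> y else False) \<inter>
        shifted_cyl n \<epsilon> (\<lambda>y. if y \<in> cube n then \<omega> y else False) x = {}"
  proof (rule ccontr)
    assume "cyl n \<epsilon> (\<lambda>y. if y \<in> cube n then \<omega> y else False) \<inter>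
        shifted_cyl n \<epsilon> (\<lambda>y. if y \<in> cube n then \<omega> y else False) x \<noteq> {}"
    then obtain \<eta> where \<eta>: "\<eta> \<in> cyl n \<epsilon> A" "\<eta> \<in> shifted_cyl n \<epsilon> A x" unfolding A_def by blast
    have e1: "\<forall>y\<in>cube n. \<eta> y = A y"
      using \<eta>(1) unfolding cyl_def by (intro small_delta[OF finite_cube _ eL]) simp
    have e2: "\<forall>y\<in>cube n. \<eta> (y + x) = A y"
      using \<eta>(2) unfolding shifted_cyl_def using small_delta[OF finite_cube _ eL] by simp
    define c :: "'d site" where "c = (\<chi> i. if x $ i > 0 then int n else 0)"
    define y0 where "y0 = c - x"
    have cc: "c \<in> cube n" unfolding c_def cube_def by auto
    have yc: "y0 \<in> cube n" unfolding cube_def mem_Collect_eq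
    proof
      fix i show "0 \<le> y0 $ i \<and> y0 $ i \<le> int n" unfolding y0_def c_def using xi[of i] unfolding abs_less_iff by auto
    qed
    have Ac: "Acorner n c" unfolding Acorner_def c_def by auto
    obtain i where i: "x $ i \<noteq> 0" using x by (metis vec_eq_iff zero_index)
    have "0 < y0 $ i \<and> y0 $ i < int n" unfolding y0_def c_def using xi[of i] i unfolding abs_less_iff by auto
    then have Ay: "\<not> Acorner n y0" unfolding Acorner_def by (intro notI) (metis less_irrefl)
    have "\<eta> c = True" using e1 cc Ac \<omega> unfolding A_def by auto
    moreover have "\<eta> (y0 + x) = False" using e2 yc Ay \<omega> unfolding A_def by auto
    moreover have "y0 + x = c" unfolding y0_def by simp
    ultimately show False by simp
  qed
qed

context
  fixes Q :: "('d::finite) config measure" and \<Phi>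
  assumes G: "is_gibbs_for \<Phi> Q" and ti: "ti_abs_summable_potential \<Phi>"
begin

lemma badx_meas: "badx n x M \<in> sets Q"
proof -
  define W where "W = Pset n x \<union> (\<lambda>z. z + x) ` Pset n x"
  have W: "finite W" unfolding W_def using finite_Pset[of n x] by simp
  show ?thesis
  proof (rule dep_meas[OF G ti W])
    fix \<omega> \<omega>' :: "'d config" assume ag: "\<forall>z\<in>W. \<omega> z = \<omega>' z"
    then have "\<forall>z\<in>Pset n x. \<omega> z = \<omega>' z \<and> \<omega> (z+x) = \<omega>' (z+x)" unfolding W_def by blast
    then show "\<omega> \<in> badx n x M \<longleftrightarrow> \<omega>' \<in> badx n x M" unfolding badx_def by (auto; metis DiffD1)
  qed
qed

lemma badx_bound:
  assumes x: "x \<noteq> 0" and t: "0 < t" "t \<le> 1"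
  shows "measure Q (badx n x M) \<le> t powr (- M) * (t + (1 - dlt \<Phi>)) ^ card (Pset n x)"
proof -
  define P where "P = Pset n x"
  define Eb where "Eb = {E\<in>Pow P. real (card E) \<le> M}"
  define Ev where "Ev = (\<lambda>E. {\<omega>::'d config. \<forall>y\<in>P - E. \<omega> y = \<omega> (y + x)})"
  have fP: "finite P" unfolding P_def by (rule finite_Pset)
  have fEb: "finite Eb" unfolding Eb_def using fP by simp
  have eq: "badx n x M = (\<Union>E\<in>Eb. Ev E)" unfolding badx_def Eb_def Ev_def P_def by auto
  have Evm: "Ev E \<in> sets Q" for E
  proof -
    define W where "W = P \<union> (\<lambda>z. z + x) ` P"
    have W: "finite W" unfolding W_def using fP by simp
    show ?thesis
    proof (rule dep_meas[OF G ti W])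
      fix \<omega> \<omega>' :: "'d config" assume ag: "\<forall>z\<in>W. \<omega> z = \<omega>' z"
      then have "\<forall>z\<in>P. \<omega> z = \<omega>' z \<and> \<omega> (z+x) = \<omega>' (z+x)" unfolding W_def by blast
      then show "\<omega> \<in> Ev E \<longleftrightarrow> \<omega>' \<in> Ev E" unfolding Ev_def by auto
    qed
  qed
  have "measure Q (badx n x M) \<le> (\<Sum>E\<in>Eb. measure Q (Ev E))"
    unfolding eq by (rule measure_UNION_le[OF fEb Evm])
  also have "\<dots> \<le> (\<Sum>E\<in>Eb. (1 - dlt \<Phi>) ^ card (P - E))"
  proof (rule sum_mono)
    fix E assume "E \<in> Eb"
    show "measure Q (Ev E) \<le> (1 - dlt \<Phi>) ^ card (P - E)"
      unfolding Ev_def by (rule chain_upper[OF G ti _ x]) (use fP in simp)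
  qed
  also have "\<dots> \<le> t powr (- M) * (t + (1 - dlt \<Phi>)) ^ card P"
    unfolding Eb_def by (rule subset_sum_bound[OF fP t]) (use dlt_le[OF ti] in simp)
  finally show ?thesis unfolding P_def .
qed

end

lemma growth:
  fixes \<kappa> L :: real and D :: nat
  assumes k: "0 < \<kappa>" and L: "L > 2 ^ (D + 4) / \<kappa>^2"
  shows "2 ^ D * L * exp (- \<kappa> * L) < exp (- \<kappa> * L / 2)"
proof -
  have L0: "0 < L" using L k by (smt (verit) divide_nonneg_nonneg zero_le_power zero_less_power)
  have "2 ^ (D + 4) < \<kappa>^2 * L" using L k by (simp add: field_simps)
  then have "2 ^ D * 16 < \<kappa>^2 * L" by (simp add: power_add)
  then have a: "2 ^ D * L * 16 < \<kappa>^2 * L * L" using L0 by (simp add: mult_strict_right_mono)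
  have "(\<kappa> * L / 4)^2 \<le> (1 + \<kappa> * L / 4)^2"
    using k L0 by (intro power_mono) auto
  also have "\<dots> \<le> exp (\<kappa> * L / 4) ^ 2"
    using k L0 by (intro power_mono) auto
  also have "\<dots> = exp (\<kappa> * L / 2)" by (simp add: exp_double[symmetric] power2_eq_square exp_add[symmetric])
  finally have b: "(\<kappa> * L / 4)^2 \<le> exp (\<kappa> * L / 2)" .
  have "2 ^ D * L < (\<kappa> * L / 4)^2" using a by (simp add: power2_eq_square field_simps)
  with b have "2 ^ D * L < exp (\<kappa> * L / 2)" by linarith
  then have "2 ^ D * L * exp (- \<kappa> * L) < exp (\<kappa> * L / 2) * exp (- \<kappa> * L)"
    by (intro mult_strict_right_mono) auto
  also have "\<dots> = exp (- \<kappa> * L / 2)" by (simp add: exp_add[symmetric])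
  finally show ?thesis .
qed

context
  fixes Q :: "('d::finite) config measure" and \<Phi>
  assumes G: "is_gibbs_for \<Phi> Q" and ti: "ti_abs_summable_potential \<Phi>"
begin

lemma good_meas: "good_set n \<epsilon> \<alpha> \<in> sets Q"
proof (rule dep_meas[OF G ti finite_cube])
  fix \<omega> \<omega>' :: "'d config" assume "\<forall>x\<in>cube n. \<omega> x = \<omega>' x"
  then have "(\<lambda>y. if y \<in> cube n then \<omega> y else False) = (\<lambda>y. if y \<in> cube n then \<omega>' y else False)"
    by auto
  then show "\<omega> \<in> good_set n \<epsilon> \<alpha> \<longleftrightarrow> \<omega>' \<in> good_set n \<epsilon> \<alpha>" unfolding good_set_def by simp
qed

lemma per_x:
  assumes al: "0 < \<alpha>" "\<alpha> < 1/2" and e: "0 < \<epsilon>"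
    and ec: "2 * \<epsilon> * ln (2 / dlt \<Phi>) \<le> dlt \<Phi> / 2 ^ (CARD('d) + 2)"
    and x: "x \<noteq> 0" "real_of_int (supnorm x) \<le> \<alpha> * real n"
  shows "measure Q (badx n x (2 * \<epsilon> * real (card (cube n :: 'd site set))))
           \<le> exp (- (dlt \<Phi> / 2 ^ (CARD('d) + 2)) * real (card (cube n :: 'd site set)))"
proof -
  define D where "D = CARD('d)"
  define \<delta> where "\<delta> = dlt \<Phi>"
  define L where "L = real (card (cube n :: 'd site set))"
  define \<kappa> where "\<kappa> = \<delta> / 2 ^ (D + 2)"
  define c where "c = ln (2 / \<delta>)"
  define M where "M = 2 * \<epsilon> * L"
  define N where "N = card (Pset n x)"
  define t where "t = \<delta> / 2"
  have d: "0 < \<delta>" "\<delta> \<le> 1/2" unfolding \<delta>_def using dlt_pos dlt_le[OF ti] by auto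
  have t: "0 < t" "t \<le> 1" unfolding t_def using d by auto
  have L0: "0 \<le> L" unfolding L_def by simp
  have mb: "measure Q (badx n x M) \<le> t powr (- M) * (t + (1 - \<delta>)) ^ N"
    unfolding N_def \<delta>_def by (rule badx_bound[OF G ti x(1) t])
  have tp: "t powr (- M) = exp (M * c)"
  proof -
    have "ln t = - c" unfolding t_def c_def using d by (simp add: ln_div)
    then show ?thesis using t by (simp add: powr_def)
  qed
  have pw: "(t + (1 - \<delta>)) ^ N \<le> exp (- \<delta> / 2 * (L / 2 ^ D))"
  proof -
    have xi: "2 * \<bar>x $ i\<bar> \<le> int n" for i
    proof -
      have "real_of_int \<bar>x $ i\<bar> \<le> real_of_int (supnorm x)" using supnorm_ge[of x i] by linarith
      also have "\<dots> \<le> \<alpha> * real n" using x by simp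
      also have "\<dots> \<le> (1/2) * real n" using al by (intro mult_right_mono) auto
      also have "\<dots> = real n / 2" by simp
      finally have "real_of_int (2 * \<bar>x $ i\<bar>) \<le> real_of_int (int n)" by simp
      then show ?thesis by (simp only: of_int_le_iff)
    qed
    have NL: "real N \<ge> L / 2 ^ D"
      using card_Pset_lower[OF xi] unfolding N_def L_def D_def card_cube by simp
    have "(t + (1 - \<delta>)) ^ N = (1 - \<delta> / 2) ^ N" unfolding t_def by (simp add: algebra_simps)
    also have "\<dots> \<le> exp (- \<delta> / 2) ^ N"
      using d exp_ge_add_one_self[of "- \<delta> / 2"] by (intro power_mono) auto
    also have "\<dots> = exp (- \<delta> / 2 * real N)" by (simp add: exp_of_nat_mult[symmetric] mult.commute)
    also have "\<dots> \<le> exp (- \<delta> / 2 * (L / 2 ^ D))"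
    proof -
      have "- \<delta> / 2 * real N \<le> - \<delta> / 2 * (L / 2 ^ D)" using NL d by (intro mult_left_mono_neg) auto
      then show ?thesis by simp
    qed
    finally show ?thesis .
  qed
  have ex: "M * c - \<delta> / 2 * (L / 2 ^ D) \<le> - \<kappa> * L"
  proof -
    have "2 * \<epsilon> * c \<le> \<kappa>" using ec unfolding c_def \<kappa>_def \<delta>_def D_def .
    then have "L * (2 * \<epsilon> * c) \<le> L * \<kappa>" using L0 by (rule mult_left_mono)
    moreover have "\<delta> / 2 * (L / 2 ^ D) = 2 * \<kappa> * L" unfolding \<kappa>_def by (simp add: power_add field_simps)
    ultimately show ?thesis unfolding M_def by (simp add: algebra_simps)
  qed
  have "measure Q (badx n x M) \<le> exp (M * c) * exp (- \<delta> / 2 * (L / 2 ^ D))"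
  proof -
    have "t powr (- M) * (t + (1 - \<delta>)) ^ N \<le> exp (M * c) * exp (- \<delta> / 2 * (L / 2 ^ D))"
      unfolding tp by (rule mult_left_mono[OF pw]) simp
    then show ?thesis using mb by linarith
  qed
  also have "\<dots> = exp (M * c - \<delta> / 2 * (L / 2 ^ D))" by (simp only: diff_conv_add_uminus exp_add mult_minus_left divide_minus_left)
  also have "\<dots> \<le> exp (- \<kappa> * L)" using ex by simp
  finally show ?thesis unfolding M_def L_def \<kappa>_def \<delta>_def D_def .
qed

end

context
  fixes Q :: "('d::finite) config measure" and \<Phi>
  assumes G: "is_gibbs_for \<Phi> Q" and ti: "ti_abs_summable_potential \<Phi>"
begin

lemma large_bound:
  assumes al: "0 < \<alpha>" "\<alpha> < 1/2" and e: "0 < \<epsilon>"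
    and ec: "2 * \<epsilon> * ln (2 / dlt \<Phi>) \<le> dlt \<Phi> / 2 ^ (CARD('d) + 2)"
  shows "measure Q (UNIV - good_set n \<epsilon> \<alpha>)
     \<le> 2 ^ CARD('d) * real (card (cube n :: 'd site set)) *
        exp (- (dlt \<Phi> / 2 ^ (CARD('d) + 2)) * real (card (cube n :: 'd site set)))"
proof -
  interpret prob_space Q by (rule PQ[OF G ti])
  define D where "D = CARD('d)"
  define L where "L = real (card (cube n :: 'd site set))"
  define \<kappa> where "\<kappa> = dlt \<Phi> / 2 ^ (D + 2)"
  define M where "M = 2 * \<epsilon> * L"
  define X where "X = {x::'d site. x \<noteq> 0 \<and> real_of_int (supnorm x) \<le> \<alpha> * real n}"
  define box where "box = {x::'d site. \<forall>i. x $ i \<in> {- int n .. int n}}"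
  have Xb: "X \<subseteq> box"
  proof
    fix x assume "x \<in> X"
    then have x: "real_of_int (supnorm x) \<le> \<alpha> * real n" unfolding X_def by simp
    have "- int n \<le> x $ i \<and> x $ i \<le> int n" for i
    proof -
      have "real_of_int \<bar>x $ i\<bar> \<le> real_of_int (supnorm x)" using supnorm_ge[of x i] by linarith
      also have "\<dots> \<le> \<alpha> * real n" using x by simp
      also have "\<dots> \<le> 1 * real n" using al by (intro mult_right_mono) auto
      finally have "\<bar>x $ i\<bar> \<le> int n" by simp
      then show ?thesis by (simp add: abs_le_iff)
    qed
    then show "x \<in> box" unfolding box_def by auto
  qed
  have fbox: "finite box" unfolding box_def by (rule box_card(1)) simp
  have cbox: "card box = (2 * n + 1) ^ D"
  proof -
    have "nat (int n - - int n + 1) = 2 * n + 1" by simp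
    then show ?thesis unfolding box_def D_def box_card(2)[OF finite_atLeastAtMost_int] by simp
  qed
  have fX: "finite X" using finite_subset[OF Xb fbox] .
  have cX: "real (card X) \<le> 2 ^ D * L"
  proof -
    have "card X \<le> card box" by (rule card_mono[OF fbox Xb])
    also have "\<dots> = (2 * n + 1) ^ D" by (rule cbox)
    also have "\<dots> \<le> (2 * (n + 1)) ^ D" by (intro power_mono) auto
    also have "\<dots> = 2 ^ D * (n + 1) ^ D" by (rule power_mult_distrib)
    finally have "real (card X) \<le> real (2 ^ D * (n + 1) ^ D)" by (simp only: of_nat_le_iff)
    then show ?thesis unfolding L_def card_cube D_def by simp
  qed
  have sub: "UNIV - good_set n \<epsilon> \<alpha> \<subseteq> (\<Union>x\<in>X. badx n x M)"
  proof
    fix \<omega> :: "'d config" assume "\<omega> \<in> UNIV - good_set n \<epsilon> \<alpha>"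
    then have "\<omega> \<notin> good_set n \<epsilon> \<alpha>" by simp
    from bad_incl[OF this] obtain x :: "'d site" where x: "x \<noteq> 0" "real_of_int (supnorm x) \<le> \<alpha> * real n"
      "\<omega> \<in> badx n x (2 * \<epsilon> * real (card (cube n :: 'd site set)))" by blast
    have "x \<in> X" unfolding X_def using x by simp
    moreover have "\<omega> \<in> badx n x M" using x(3) unfolding M_def L_def .
    ultimately show "\<omega> \<in> (\<Union>x\<in>X. badx n x M)" by blast
  qed
  have bm: "\<And>x. x \<in> X \<Longrightarrow> badx n x M \<in> sets Q" by (rule badx_meas[OF G ti])
  have "measure Q (UNIV - good_set n \<epsilon> \<alpha>) \<le> measure Q (\<Union>x\<in>X. badx n x M)"
    by (rule finite_measure_mono[OF sub sets.finite_UN[OF fX bm]])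
  also have "\<dots> \<le> (\<Sum>x\<in>X. measure Q (badx n x M))" by (rule measure_UNION_le[OF fX bm])
  also have "\<dots> \<le> (\<Sum>x\<in>X. exp (- \<kappa> * L))"
  proof (rule sum_mono)
    fix x assume "x \<in> X"
    then have x: "x \<noteq> 0" "real_of_int (supnorm x) \<le> \<alpha> * real n" unfolding X_def by auto
    show "measure Q (badx n x M) \<le> exp (- \<kappa> * L)"
      unfolding M_def L_def \<kappa>_def D_def by (rule per_x[OF G ti al e ec x])
  qed
  also have "\<dots> = real (card X) * exp (- \<kappa> * L)" by simp
  also have "\<dots> \<le> 2 ^ D * L * exp (- \<kappa> * L)" using cX by (intro mult_right_mono) auto
  finally show ?thesis unfolding D_def L_def \<kappa>_def .
qed

end

theorem proposition2p7:
  fixes Q :: "('d::finite) config measure"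
  assumes "CARD('d) \<ge> 2"
    and "stationary_gibbs Q"
  shows "\<forall>\<alpha>::real. 0 < \<alpha> \<and> \<alpha> < 1/2 \<longrightarrow>
           (\<exists>\<epsilon>0>0. \<forall>\<epsilon>::real. 0 < \<epsilon> \<and> \<epsilon> < \<epsilon>0 \<longrightarrow>
              (\<exists>\<nu>>0. \<forall>n::nat. n \<ge> 1 \<longrightarrow>
                 measure Q (good_set n \<epsilon> \<alpha>) > 1 - exp (- \<nu> * real n ^ CARD('d))))"
proof (intro allI impI)
  fix \<alpha> :: real assume \<alpha>: "0 < \<alpha> \<and> \<alpha> < 1/2"
  obtain \<Phi> where ti: "ti_abs_summable_potential \<Phi>" and G: "is_gibbs_for \<Phi> Q"
    using assms(2) unfolding stationary_gibbs_def by blast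
  interpret prob_space Q by (rule PQ[OF G ti])
  define D where "D = CARD('d)"
  have D1: "1 \<le> D" unfolding D_def using assms(1) by simp
  define \<delta> where "\<delta> = dlt \<Phi>"
  have d: "0 < \<delta>" "\<delta> \<le> 1/2" unfolding \<delta>_def using dlt_pos dlt_le[OF ti] by auto
  define c where "c = ln (2 / \<delta>)"
  have c: "0 < c"
  proof -
    have "1 < 2 / \<delta>" using d by (simp add: field_simps)
    then show ?thesis unfolding c_def by (rule ln_gt_zero)
  qed
  define \<kappa> where "\<kappa> = \<delta> / 2 ^ (D + 2)"
  have k: "0 < \<kappa>" unfolding \<kappa>_def using d by simp
  define L0 where "L0 = 2 ^ (D + 4) / \<kappa>^2"
  have L0: "0 < L0" unfolding L0_def using k by simp
  define \<epsilon>0 where "\<epsilon>0 = min (\<kappa> / (2 * c)) (1 / (L0 + 1))"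
  have e0: "0 < \<epsilon>0" unfolding \<epsilon>0_def using k c L0 by simp
  show "\<exists>\<epsilon>0>0. \<forall>\<epsilon>::real. 0 < \<epsilon> \<and> \<epsilon> < \<epsilon>0 \<longrightarrow>
              (\<exists>\<nu>>0. \<forall>n::nat. n \<ge> 1 \<longrightarrow>
                 measure Q (good_set n \<epsilon> \<alpha>) > 1 - exp (- \<nu> * real n ^ CARD('d)))"
  proof (rule exI[of _ \<epsilon>0], intro conjI allI impI e0)
    fix \<epsilon> :: real assume e: "0 < \<epsilon> \<and> \<epsilon> < \<epsilon>0"
    have ec: "2 * \<epsilon> * ln (2 / dlt \<Phi>) \<le> dlt \<Phi> / 2 ^ (CARD('d) + 2)"
    proof -
      have "\<epsilon> \<le> \<kappa> / (2 * c)" using e unfolding \<epsilon>0_def by simp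
      then have "\<epsilon> * (2 * c) \<le> \<kappa>" using c by (simp add: field_simps)
      then show ?thesis unfolding \<kappa>_def c_def \<delta>_def D_def by (simp add: algebra_simps)
    qed
    have eL0: "\<epsilon> * (L0 + 1) < 1"
    proof -
      have "\<epsilon> < 1 / (L0 + 1)" using e unfolding \<epsilon>0_def by simp
      then show ?thesis using L0 by (simp add: field_simps)
    qed
    define bad where "bad = (\<lambda>n. measure Q (UNIV - good_set n \<epsilon> \<alpha>))"
    have geq: "measure Q (good_set n \<epsilon> \<alpha>) = 1 - bad n" for n
    proof -
      have "bad n = 1 - measure Q (good_set n \<epsilon> \<alpha>)"
        unfolding bad_def using prob_compl[OF good_meas[OF G ti, of n \<epsilon> \<alpha>]] spQ[OF G ti] by simp
      then show ?thesis by simp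
    qed
    define Small where "Small = {n::nat. 1 \<le> n \<and> real ((n + 1) ^ D) \<le> L0}"
    have fS: "finite Small"
    proof (rule finite_subset)
      show "Small \<subseteq> {..nat \<lceil>L0\<rceil>}"
      proof
        fix n assume "n \<in> Small"
        then have h: "real ((n + 1) ^ D) \<le> L0" unfolding Small_def by simp
        have "n + 1 \<le> (n + 1) ^ D" using D1 by (intro self_le_power) auto
        then have "n \<le> (n + 1) ^ D" by linarith
        then have "real n \<le> real ((n + 1) ^ D)" by (simp only: of_nat_le_iff)
        then have "real n \<le> real_of_int \<lceil>L0\<rceil>" using h le_of_int_ceiling[of L0] by linarith
        then have "int n \<le> \<lceil>L0\<rceil>" by linarith
        then show "n \<in> {..nat \<lceil>L0\<rceil>}" by simp
      qed
    qed simp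
    have small_lt: "bad n < 1" if "n \<in> Small" for n
    proof -
      have n1: "n \<ge> 1" and hL: "real ((n + 1) ^ D) \<le> L0" using that unfolding Small_def by auto
      have eL: "\<epsilon> * real (card (cube n :: 'd site set)) < 1"
      proof -
        have "\<epsilon> * real ((n + 1) ^ D) \<le> \<epsilon> * (L0 + 1)" using hL e by (intro mult_left_mono) auto
        then show ?thesis using eL0 unfolding card_cube D_def by linarith
      qed
      have sub: "{\<omega>::'d config. \<forall>y\<in>cube n. \<omega> y = Acorner n y} \<subseteq> good_set n \<epsilon> \<alpha>"
      proof
        fix \<omega> :: "'d config" assume "\<omega> \<in> {\<omega>::'d config. \<forall>y\<in>cube n. \<omega> y = Acorner n y}"
        then have "\<forall>y\<in>cube n. \<omega> y = Acorner n y" by simp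
        then show "\<omega> \<in> good_set n \<epsilon> \<alpha>" using \<alpha> by (intro corner_good[OF eL _ n1]) auto
      qed
      have "0 < dlt \<Phi> ^ card (cube n :: 'd site set)" using dlt_pos[of \<Phi>] by (rule zero_less_power)
      also have "\<dots> \<le> measure Q {\<omega>. \<forall>y\<in>cube n. \<omega> y = Acorner n y}"
        by (rule cyl_lower[OF G ti finite_cube])
      also have "\<dots> \<le> measure Q (good_set n \<epsilon> \<alpha>)"
        by (rule finite_measure_mono[OF sub good_meas[OF G ti]])
      finally show ?thesis using geq[of n] by linarith
    qed
    define q where "q = Max (bad ` Small \<union> {0})"
    have fq: "finite (bad ` Small \<union> {0})" using fS by simp
    have q_in: "q \<in> bad ` Small \<union> {0}" unfolding q_def using fq by (intro Max_in) auto
    have q1: "q < 1" using q_in small_lt by auto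
    have q0: "0 \<le> q" unfolding q_def using fq by (intro Max_ge) auto
    have qge: "bad n \<le> q" if "n \<in> Small" for n unfolding q_def using fq that by (intro Max_ge) auto
    define \<nu>2 where "\<nu>2 = ln (2 / (1 + q)) / (L0 + 1)"
    have nu2: "0 < \<nu>2"
    proof -
      have "1 < 2 / (1 + q)" using q0 q1 by (simp add: field_simps)
      then have "0 < ln (2 / (1 + q))" by (rule ln_gt_zero)
      then show ?thesis unfolding \<nu>2_def using L0 by simp
    qed
    have enu2: "exp (- \<nu>2 * (L0 + 1)) = (1 + q) / 2"
    proof -
      have "- \<nu>2 * (L0 + 1) = - ln (2 / (1 + q))" unfolding \<nu>2_def using L0 by simp
      also have "\<dots> = ln ((1 + q) / 2)" using q0 by (simp add: ln_div)
      finally show ?thesis using q0 by simp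
    qed
    define \<nu> where "\<nu> = min (\<kappa> / 2) \<nu>2"
    have nu: "0 < \<nu>" unfolding \<nu>_def using k nu2 by simp
    show "\<exists>\<nu>>0. \<forall>n::nat. n \<ge> 1 \<longrightarrow> measure Q (good_set n \<epsilon> \<alpha>) > 1 - exp (- \<nu> * real n ^ CARD('d))"
    proof (rule exI[of _ \<nu>], intro conjI allI impI)
      show "0 < \<nu>" by (rule nu)
    next
      fix n :: nat assume n1: "n \<ge> 1"
      have nD0: "0 \<le> real n ^ CARD('d)" by simp
      have nDL: "real n ^ CARD('d) \<le> real ((n + 1) ^ D)" unfolding D_def by (simp add: power_mono)
      have "bad n < exp (- \<nu> * real n ^ CARD('d))"
      proof (cases "n \<in> Small")
        case True
        have "bad n \<le> q" by (rule qge[OF True])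
        also have "q < (1 + q) / 2" using q1 by simp
        also have "(1 + q) / 2 = exp (- \<nu>2 * (L0 + 1))" by (rule enu2[symmetric])
        also have "\<dots> \<le> exp (- \<nu> * real n ^ CARD('d))"
        proof -
          have "real ((n + 1) ^ D) \<le> L0" using True unfolding Small_def by simp
          then have "real n ^ CARD('d) \<le> L0 + 1" using nDL by linarith
          moreover have "\<nu> \<le> \<nu>2" unfolding \<nu>_def by simp
          ultimately have "\<nu> * real n ^ CARD('d) \<le> \<nu>2 * (L0 + 1)"
            using nD0 nu by (intro mult_mono) auto
          then show ?thesis by simp
        qed
        finally show ?thesis .
      next
        case False
        define L where "L = real (card (cube n :: 'd site set))"
        have LL: "L = real ((n + 1) ^ D)" unfolding L_def card_cube D_def ..
        have LgL0: "L > L0" using False n1 unfolding Small_def LL by auto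
        have "bad n \<le> 2 ^ D * L * exp (- \<kappa> * L)"
          unfolding bad_def L_def \<kappa>_def \<delta>_def D_def
          by (rule large_bound[OF G ti _ _ _ ec]) (use \<alpha> e in auto)
        also have "\<dots> < exp (- \<kappa> * L / 2)"
          by (rule growth[OF k]) (use LgL0 in \<open>simp add: L0_def\<close>)
        also have "\<dots> \<le> exp (- \<nu> * real n ^ CARD('d))"
        proof -
          have "real n ^ CARD('d) \<le> L" unfolding LL using nDL .
          moreover have "\<nu> \<le> \<kappa> / 2" unfolding \<nu>_def by simp
          ultimately have "\<nu> * real n ^ CARD('d) \<le> \<kappa> / 2 * L"
            using nD0 nu by (intro mult_mono) auto
          moreover have "\<kappa> / 2 * L = \<kappa> * L / 2" by simp
          ultimately have "- \<kappa> * L / 2 \<le> - \<nu> * real n ^ CARD('d)" by linarith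
          then show ?thesis by simp
        qed
        finally show ?thesis .
      qed
      then show "measure Q (good_set n \<epsilon> \<alpha>) > 1 - exp (- \<nu> * real n ^ CARD('d))"
        using geq[of n] by linarith
    qed
  qed
qed


end
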